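(* Suppose we have $n\ge3$ agents with additive, identical, normalized valuations, provided with a prediction of accuracy $\eta<1-\frac{1}{2(n-1+2a)}$ for some given $a\in(0,1]$; that is, the allowed error between the prediction and the true valuation is $1-\eta>\frac{1}{2(n-1+2a)}$. Then there is no online algorithm that guarantees an $a$-EFX allocation for all instances with error at most $1-\eta$, even when $T'=T=n+1$ and the prediction and the true valuation are $3$-value functions.
   Context: Online fair division with predictions and identical valuations: agents $[n]$; goods $g_1,\dots,g_T$ arrive one per time step; all agents share a true additive normalized valuation $v$ ($v(g_t)\ge0$, $\sum_{t\in[T]}v(g_t)=1$, $v(S)=\sum_{g\in S}v(g)$), and before any arrival the algorithm receives a prediction $p=(p(g_1),\dots,p(g_{T'}))$ (an additive normalized valuation over $T'$ predicted goods) and the accuracy level. Error $\frac12\sum_{t=1}^{\max\{T,T'\}}|p(g_t)-v(g_t)|$ (missing entries set to $0$); accuracy $\eta$ means the error is at most $1-\eta$. At time $t$, $v(g_t)$ is revealed and $g_t$ must be irrevocably allocated. For $S\ne\emptyset$, $\bar S=S\setminus\{g\}$ with $g\in\arg\max_{g'\in S}v(S\setminus\{g'\})$, $\bar\emptyset=\emptyset$. An allocation is $a$-EFX if $v(A_i)\ge a\cdot v(\bar A_j)$ for all $i,j$. A function is $k$-value if it takes at most $k$ distinct values. *)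

theory Defs
  imports Complex_Main
begin

text \<open>Goods g_1..g_T are indexed 0..T-1; a valuation is the list of the goods' values.\<close>

definition normalized :: "real list \<Rightarrow> bool" where
  "normalized v \<longleftrightarrow> (\<forall>x\<in>set v. 0 \<le> x) \<and> sum_list v = 1"

definition val :: "real list \<Rightarrow> nat set \<Rightarrow> real" where
  "val v S = (\<Sum>t\<in>S. v ! t)"

definition bar :: "real list \<Rightarrow> nat set \<Rightarrow> nat set" where
  "bar v S = (if S = {} then {} else
     S - {SOME g. g \<in> S \<and> (\<forall>g'\<in>S. val v (S - {g'}) \<le> val v (S - {g}))})"

definition a_EFX :: "real list \<Rightarrow> nat \<Rightarrow> (nat \<Rightarrow> nat set) \<Rightarrow> real \<Rightarrow> bool" where
  "a_EFX v n A a \<longleftrightarrow> (\<forall>i<n. \<forall>j<n. val v (A i) \<ge> a * val v (bar v (A j)))"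

definition pred_error :: "real list \<Rightarrow> real list \<Rightarrow> real" where
  "pred_error p v = (1/2) * (\<Sum>t<max (length p) (length v).
      \<bar>(if t < length p then p ! t else 0) - (if t < length v then v ! t else 0)\<bar>)"

text \<open>A deterministic online algorithm is a map from (prediction, values revealed so far)
  to the agent receiving the currently arriving good.  Bundle of agent i:\<close>
definition online_alloc :: "(real list \<Rightarrow> real list \<Rightarrow> nat) \<Rightarrow> real list \<Rightarrow> real list \<Rightarrow> nat \<Rightarrow> nat set" where
  "online_alloc alg p v i = {t. t < length v \<and> alg p (take (Suc t) v) = i}"

end

theory Submission
  imports Defs
begin

lemma bar_ge:
  assumes "finite S" "g \<in> S"
  shows "val v (S - {g}) \<le> val v (bar v S)"
proof -
  let ?f = "\<lambda>g. val v (S - {g})"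
  have ne: "?f ` S \<noteq> {}" using assms by auto
  have "Max (?f ` S) \<in> ?f ` S" using assms ne by (intro Max_in) auto
  then obtain g0 where g0: "g0 \<in> S" "?f g0 = Max (?f ` S)" by auto
  have ex: "\<exists>g. g \<in> S \<and> (\<forall>g'\<in>S. ?f g' \<le> ?f g)"
    using g0 assms(1) by (intro exI[of _ g0]) auto
  define h where "h = (SOME g. g \<in> S \<and> (\<forall>g'\<in>S. ?f g' \<le> ?f g))"
  have h: "h \<in> S \<and> (\<forall>g'\<in>S. ?f g' \<le> ?f h)"
    unfolding h_def by (rule someI_ex[OF ex])
  have "bar v S = S - {h}" using assms unfolding bar_def h_def by auto
  then show ?thesis using h assms by auto
qed

lemma val_ge:
  assumes "finite S" "t \<in> S" "\<forall>x\<in>S. 0 \<le> v ! x"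
  shows "v ! t \<le> val v S"
  unfolding val_def using assms by (intro member_le_sum) auto

lemma val_mono:
  assumes "finite S" "T \<subseteq> S" "\<forall>x\<in>S. 0 \<le> v ! x"
  shows "val v T \<le> val v S"
  unfolding val_def using assms by (intro sum_mono2) auto

lemma nth_l:
  "t < m \<Longrightarrow> (replicate m e @ [x, y]) ! t = e"
  "(replicate m e @ [x, y]) ! m = x"
  "(replicate m e @ [x, y]) ! Suc m = y"
  by (auto simp: nth_append)

lemma take_l:
  "t < m \<Longrightarrow> take (Suc t) (replicate m e @ [x, y]) = replicate (Suc t) e"
  by (simp add: min_def)

lemma take_l2: "take (Suc (Suc m)) (replicate m e @ [x, y]) = replicate m e @ [x, y]"
  by simp

lemma card_l: "card (set (replicate m e @ [x, y])) \<le> 3"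
proof -
  have "set (replicate m e @ [x, y]) \<subseteq> {e, x, y}" by auto
  then have "card (set (replicate m e @ [x, y])) \<le> card {e, x, y}" by (intro card_mono) auto
  also have "\<dots> \<le> 3" by (simp add: card_insert_if)
  finally show ?thesis .
qed

lemma sum_l: "sum_list (replicate m e @ [x, y]) = real m * e + x + y"
  by (simp add: sum_list_replicate)

lemma err_l:
  "pred_error (replicate m e @ [x, y]) (replicate m e @ [x', y']) = (\<bar>x - x'\<bar> + \<bar>y - y'\<bar>) / 2"
proof -
  have "(\<Sum>t<Suc (Suc m). \<bar>(replicate m e @ [x, y]) ! t - (replicate m e @ [x', y']) ! t\<bar>)
     = (\<Sum>t<m. \<bar>(replicate m e @ [x, y]) ! t - (replicate m e @ [x', y']) ! t\<bar>) + \<bar>x - x'\<bar> + \<bar>y - y'\<bar>"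
    by (simp add: nth_l)
  also have "(\<Sum>t<m. \<bar>(replicate m e @ [x, y]) ! t - (replicate m e @ [x', y']) ! t\<bar>) = 0"
    by (intro sum.neutral) (simp add: nth_l)
  finally show ?thesis unfolding pred_error_def by simp
qed


lemma not_efx:
  assumes "i < n" "j < n" "val v (A i) < a * val v (bar v (A j))"
  shows "\<not> a_EFX v n A a"
  using assms unfolding a_EFX_def by (auto simp: not_le)

theorem lemma4p7:
  fixes n :: nat and a \<eta> :: real and alg :: "real list \<Rightarrow> real list \<Rightarrow> nat"
  assumes "n \<ge> 3" and "0 < a" and "a \<le> 1"
    and "\<eta> < 1 - 1 / (2 * (real n - 1 + 2 * a))"
    and "\<forall>p vs. alg p vs < n"
  shows "\<exists>p v. length p = n + 1 \<and> length v = n + 1 \<and> normalized p \<and> normalized v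
      \<and> card (set p) \<le> 3 \<and> card (set v) \<le> 3 \<and> pred_error p v \<le> 1 - \<eta>
      \<and> \<not> a_EFX v n (online_alloc alg p v) a"
proof -
  obtain m where nm: "n = Suc m" and m2: "m \<ge> 2" using assms(1)
    by (metis Suc_le_D Suc_le_mono numeral_3_eq_3 numeral_2_eq_2)
  define e where "e = 1 - \<eta>"
  have pos: "0 < 2 * (real n - 1 + 2 * a)" using assms(1,2) by simp
  have e0: "0 < e" using assms(4) pos unfolding e_def
    by (smt (verit) divide_pos_pos)
  define w where "w = min e (1 / (4 * real n))"
  have n0: "real n \<ge> 3" using assms(1) by simp
  have w0: "0 < w" using e0 n0 unfolding w_def by simp
  have we: "w \<le> e" unfolding w_def by simp
  have wn: "w * (4 * real n) \<le> 1" unfolding w_def using n0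
    by (metis min.cobounded2 mult.commute le_divide_eq mult_pos_pos zero_less_numeral
        less_le_trans zero_less_one order.strict_trans1 linorder_not_le
        of_nat_0_less_iff)
  define \<epsilon> where "\<epsilon> = a * w / 2"
  have eps0: "0 < \<epsilon>" using assms(2) w0 unfolding \<epsilon>_def by simp
  have epsaw: "\<epsilon> < a * w" using assms(2) w0 unfolding \<epsilon>_def by simp
  define u where "u = 1 - real m * \<epsilon> - w"
  have meps: "real m * \<epsilon> \<le> real n * w"
  proof -
    have "\<epsilon> \<le> w" using assms(3) w0 unfolding \<epsilon>_def by (simp add: mult_left_le_one_le)
    then have "real m * \<epsilon> \<le> real m * w" by (simp add: mult_left_mono)
    also have "\<dots> \<le> real n * w" using nm w0 by (simp add: mult_right_mono)
    finally show ?thesis .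
  qed
  have nw: "real n * w \<le> 1 / 4" using wn by (simp add: algebra_simps)
  have w3: "3 * w \<le> real n * w" using n0 w0 by (simp add: mult_right_mono)
  have uw: "w \<le> u" using meps nw w3 unfolding u_def by linarith
  have sumu: "real m * \<epsilon> + u + w = 1" unfolding u_def by simp
  define p where "p = replicate m \<epsilon> @ [u, w]"
  define vD where "vD = replicate m \<epsilon> @ [u + w, 0]"
  define d where "d t = alg p (replicate (Suc t) \<epsilon>)" for t
  have lenp: "length p = n + 1" "length vD = n + 1" using nm unfolding p_def vD_def by auto
  have normp: "normalized p" unfolding normalized_def p_def sum_l
    using eps0 w0 uw sumu by auto
  have normvD: "normalized vD" unfolding normalized_def vD_def sum_l
    using eps0 w0 uw sumu by auto
  have cards: "card (set p) \<le> 3" "card (set vD) \<le> 3" unfolding p_def vD_def by (rule card_l)+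
  have alloc: "online_alloc alg p v j = {t. t < Suc (Suc m) \<and> alg p (take (Suc t) v) = j}"
    if "length v = Suc (Suc m)" for v j
    unfolding online_alloc_def using that by simp
  show ?thesis
  proof (cases "inj_on d {..<m}")
    case True
    let ?A = "online_alloc alg p p"
    define i1 where "i1 = alg p (take (Suc m) p)"
    define i2 where "i2 = alg p p"
    have Aeq: "?A j = {t. t < Suc (Suc m) \<and> alg p (take (Suc t) p) = j}" for j
      using alloc[of p j] lenp nm by simp
    have memlow: "t \<in> ?A j \<longleftrightarrow> d t = j" if "t < m" for t j
    proof -
      have "take (Suc t) p = replicate (Suc t) \<epsilon>" using that unfolding p_def by (rule take_l)
      then show ?thesis using that unfolding Aeq d_def by auto
    qed
    have memm: "m \<in> ?A j \<longleftrightarrow> i1 = j" for j unfolding Aeq i1_def by auto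
    have memsm: "Suc m \<in> ?A j \<longleftrightarrow> i2 = j" for j proof -
      have "take (Suc (Suc m)) p = p" using lenp nm by simp
      then show ?thesis unfolding Aeq i2_def by simp
    qed
    have fin: "finite (?A j)" for j unfolding Aeq by simp
    have nonneg: "\<forall>x\<in>?A j. 0 \<le> p ! x" for j
    proof
      fix x assume "x \<in> ?A j"
      then have "x < length p" unfolding Aeq using lenp nm by simp
      then have "p ! x \<in> set p" by simp
      then show "0 \<le> p ! x" using normp unfolding normalized_def by auto
    qed
    have pm: "p ! m = u" "p ! Suc m = w" "\<And>t. t < m \<Longrightarrow> p ! t = \<epsilon>"
      unfolding p_def by (auto simp: nth_l)
    have i12: "i1 < n" "i2 < n" using assms(5) unfolding i1_def i2_def by auto
    obtain k where k: "k < n" "k \<noteq> i1" "k \<noteq> i2"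
    proof -
      have "\<exists>k\<in>{0,1,2::nat}. k \<noteq> i1 \<and> k \<noteq> i2" by auto
      then obtain k where "k \<in> {0,1,2::nat}" "k \<noteq> i1" "k \<noteq> i2" by blast
      moreover have "k < n" using \<open>k \<in> {0,1,2::nat}\<close> assms(1) by auto
      ultimately show ?thesis using that by blast
    qed
    have Ak: "val p (?A k) \<le> \<epsilon>"
    proof (cases "?A k = {}")
      case True then show ?thesis using eps0 unfolding val_def by simp
    next
      case False
      then obtain t0 where t0: "t0 \<in> ?A k" by blast
      have sub: "?A k \<subseteq> {..<m}"
      proof
        fix t assume t: "t \<in> ?A k"
        then have "t < Suc (Suc m)" unfolding Aeq by simp
        moreover have "t \<noteq> m" using t memm k by auto
        moreover have "t \<noteq> Suc m" using t memsm k by auto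
        ultimately show "t \<in> {..<m}" by auto
      qed
      have "?A k = {t0}"
      proof
        show "?A k \<subseteq> {t0}"
        proof
          fix t assume t: "t \<in> ?A k"
          have "t < m" "t0 < m" using t t0 sub by auto
          then have "d t = k" "d t0 = k" using t t0 memlow by auto
          then show "t \<in> {t0}" using True \<open>t < m\<close> \<open>t0 < m\<close> unfolding inj_on_def by auto
        qed
      qed (use t0 in auto)
      then show ?thesis using sub t0 pm unfolding val_def by auto
    qed
    obtain j where j: "j < n" "w \<le> val p (bar p (?A j))"
    proof (cases "i1 \<in> d ` {..<m}")
      case True
      then obtain t0 where t0: "t0 < m" "d t0 = i1" by auto
      have "t0 \<in> ?A i1" using t0 memlow by auto
      then have "val p (?A i1 - {t0}) \<le> val p (bar p (?A i1))" using fin by (intro bar_ge)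
      moreover have "p ! m \<le> val p (?A i1 - {t0})"
        using fin nonneg memm t0 by (intro val_ge) auto
      ultimately show ?thesis using that i12 pm uw by fastforce
    next
      case F1: False
      show ?thesis
      proof (cases "i2 \<in> d ` {..<m}")
        case True
        then obtain t0 where t0: "t0 < m" "d t0 = i2" by auto
        have "t0 \<in> ?A i2" using t0 memlow by auto
        then have "val p (?A i2 - {t0}) \<le> val p (bar p (?A i2))" using fin by (intro bar_ge)
        moreover have "p ! Suc m \<le> val p (?A i2 - {t0})"
          using fin nonneg memsm t0 by (intro val_ge) auto
        ultimately show ?thesis using that i12 pm by fastforce
      next
        case False
        have "i1 = i2"
        proof (rule ccontr)
          assume ne: "i1 \<noteq> i2"
          have cd: "card (d ` {..<m}) = m" using True by (simp add: card_image)
          have "insert i1 (insert i2 (d ` {..<m})) \<subseteq> {..<n}"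
            using i12 assms(5) unfolding d_def by auto
          then have "card (insert i1 (insert i2 (d ` {..<m}))) \<le> n"
            by (metis card_lessThan card_mono finite_lessThan)
          moreover have "card (insert i1 (insert i2 (d ` {..<m}))) = m + 2"
            using F1 False ne cd by simp
          ultimately show False using nm by simp
        qed
        have "m \<in> ?A i1" using memm by simp
        then have "val p (?A i1 - {m}) \<le> val p (bar p (?A i1))" using fin by (intro bar_ge)
        moreover have "p ! Suc m \<le> val p (?A i1 - {m})"
          using fin nonneg memsm \<open>i1 = i2\<close> by (intro val_ge) auto
        ultimately show ?thesis using that i12 pm by fastforce
      qed
    qed
    have "val p (?A k) < a * val p (bar p (?A j))"
    proof -
      have "a * w \<le> a * val p (bar p (?A j))" using j assms(2) by (simp add: mult_left_mono)
      then show ?thesis using Ak epsaw by linarith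
    qed
    then have "\<not> a_EFX p n ?A a" using k j by (intro not_efx)
    moreover have "pred_error p p \<le> 1 - \<eta>" unfolding p_def err_l using e0 e_def by simp
    ultimately show ?thesis using lenp normp cards by blast

  next
    case False
    then obtain t1 t2 where t12: "t1 < m" "t2 < m" "t1 \<noteq> t2" "d t1 = d t2"
      unfolding inj_on_def by auto
    let ?A = "online_alloc alg p vD"
    define i1 where "i1 = alg p (take (Suc m) vD)"
    have Aeq: "?A j = {t. t < Suc (Suc m) \<and> alg p (take (Suc t) vD) = j}" for j
      using alloc[of vD j] lenp nm by simp
    have memlow: "t \<in> ?A j \<longleftrightarrow> d t = j" if "t < m" for t j
    proof -
      have "take (Suc t) vD = replicate (Suc t) \<epsilon>" using that unfolding vD_def by (rule take_l)
      then show ?thesis using that unfolding Aeq d_def by auto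
    qed
    have memm: "m \<in> ?A j \<longleftrightarrow> i1 = j" for j unfolding Aeq i1_def by auto
    have fin: "finite (?A j)" for j unfolding Aeq by simp
    have nonneg: "\<forall>x\<in>?A j. 0 \<le> vD ! x" for j
    proof
      fix x assume "x \<in> ?A j"
      then have "x < length vD" unfolding Aeq using lenp nm by simp
      then have "vD ! x \<in> set vD" by simp
      then show "0 \<le> vD ! x" using normvD unfolding normalized_def by auto
    qed
    have vm: "vD ! Suc m = 0" "\<And>t. t < m \<Longrightarrow> vD ! t = \<epsilon>"
      unfolding vD_def by (auto simp: nth_l)
    define j where "j = d t1"
    have jn: "j < n" using assms(5) unfolding j_def d_def by auto
    have "t1 \<in> ?A j" "t2 \<in> ?A j" using t12 memlow unfolding j_def by auto
    then have "val vD (?A j - {t1}) \<le> val vD (bar vD (?A j))"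
      "vD ! t2 \<le> val vD (?A j - {t1})"
      using fin nonneg t12 by (auto intro!: bar_ge val_ge)
    then have jv: "\<epsilon> \<le> val vD (bar vD (?A j))" using vm t12 by simp
    have cle: "card (d ` {..<m}) < m"
    proof -
      have "card (d ` {..<m}) \<le> m" using card_image_le[of "{..<m}" d] by simp
      moreover have "card (d ` {..<m}) \<noteq> m"
        using False inj_on_iff_eq_card[of "{..<m}" d] by simp
      ultimately show ?thesis by simp
    qed
    have "\<not> {..<n} \<subseteq> insert i1 (d ` {..<m})"
    proof
      assume "{..<n} \<subseteq> insert i1 (d ` {..<m})"
      then have "n \<le> card (insert i1 (d ` {..<m}))"
        by (metis card_lessThan card_mono finite_imageI finite_insert finite_lessThan)
      moreover have "card (insert i1 (d ` {..<m})) \<le> Suc (card (d ` {..<m}))"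
        by (simp add: card_insert_le_m1 card_insert_if)
      ultimately show False using cle nm by simp
    qed
    then obtain k where k: "k < n" "k \<noteq> i1" "k \<notin> d ` {..<m}" by auto
    have Ak: "val vD (?A k) = 0"
      unfolding val_def
    proof (rule sum.neutral, rule ballI)
      fix t assume t: "t \<in> ?A k"
      then have "t < Suc (Suc m)" unfolding Aeq by simp
      moreover have "t \<noteq> m" using t memm k by auto
      moreover have "\<not> t < m" using t memlow k by auto
      ultimately have "t = Suc m" by auto
      then show "vD ! t = 0" using vm by simp
    qed
    have "val vD (?A k) < a * val vD (bar vD (?A j))"
    proof -
      have "a * \<epsilon> \<le> a * val vD (bar vD (?A j))" using jv assms(2) by (simp add: mult_left_mono)
      then show ?thesis using Ak eps0 assms(2) by (smt (verit) mult_pos_pos)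
    qed
    then have "\<not> a_EFX vD n ?A a" using k jn by (intro not_efx)
    moreover have "pred_error p vD \<le> 1 - \<eta>" unfolding p_def vD_def err_l
      using w0 we e_def by simp
    ultimately show ?thesis using lenp normp normvD cards by blast

  qed
qed

end
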